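(* Let $k\ge 5$ be an integer and let $H$ be a weighted graph with edge weight $\omega:E(H)\to\{3,4,5\}$. If $H$ contains no cycle of odd weight smaller than $2k+1$, then for every $u\in V(H)$ the set $N^{k-3}_\omega[u]$ is weighted bipartite.
   Context: The weight of a subgraph is the sum of the weights of its edges. The weighted distance $d_\omega(x,y)$ is the minimum weight of an $x,y$-path in $H$, and $N^i_\omega[u]=\{x\in V(H): d_\omega(x,u)\le i\}$. A vertex set $S$ is weighted bipartite if the induced subgraph $H[S]$ contains no cycle of odd weight. *)

theory Defs
  imports Main "HOL-Library.Extended_Nat"
begin

definition wgraph :: "'a set \<Rightarrow> ('a \<Rightarrow> 'a \<Rightarrow> bool) \<Rightarrow> ('a \<Rightarrow> 'a \<Rightarrow> nat) \<Rightarrow> bool" where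
  "wgraph V E w \<longleftrightarrow> finite V
     \<and> (\<forall>x y. E x y \<longrightarrow> x \<in> V \<and> y \<in> V)
     \<and> (\<forall>x y. E x y \<longrightarrow> E y x)
     \<and> (\<forall>x. \<not> E x x)
     \<and> (\<forall>x y. E x y \<longrightarrow> w x y = w y x)"

definition walk_weight :: "('a \<Rightarrow> 'a \<Rightarrow> nat) \<Rightarrow> 'a list \<Rightarrow> nat" where
  "walk_weight w xs = sum_list (map (\<lambda>(a, b). w a b) (zip xs (tl xs)))"

definition is_path :: "'a set \<Rightarrow> ('a \<Rightarrow> 'a \<Rightarrow> bool) \<Rightarrow> 'a \<Rightarrow> 'a \<Rightarrow> 'a list \<Rightarrow> bool" where
  "is_path V E x y ps \<longleftrightarrow> ps \<noteq> [] \<and> hd ps = x \<and> last ps = y \<and> distinct ps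
     \<and> set ps \<subseteq> V \<and> (\<forall>i. Suc i < length ps \<longrightarrow> E (ps ! i) (ps ! Suc i))"

definition wdist :: "'a set \<Rightarrow> ('a \<Rightarrow> 'a \<Rightarrow> bool) \<Rightarrow> ('a \<Rightarrow> 'a \<Rightarrow> nat) \<Rightarrow> 'a \<Rightarrow> 'a \<Rightarrow> enat" where
  "wdist V E w x y = Inf {enat (walk_weight w ps) | ps. is_path V E x y ps}"

definition wball :: "'a set \<Rightarrow> ('a \<Rightarrow> 'a \<Rightarrow> bool) \<Rightarrow> ('a \<Rightarrow> 'a \<Rightarrow> nat) \<Rightarrow> nat \<Rightarrow> 'a \<Rightarrow> 'a set" where
  "wball V E w i u = {x \<in> V. wdist V E w x u \<le> enat i}"

definition is_cycle :: "'a set \<Rightarrow> ('a \<Rightarrow> 'a \<Rightarrow> bool) \<Rightarrow> 'a list \<Rightarrow> bool" where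
  "is_cycle V E cs \<longleftrightarrow> length cs \<ge> 3 \<and> distinct cs \<and> set cs \<subseteq> V
     \<and> (\<forall>i. Suc i < length cs \<longrightarrow> E (cs ! i) (cs ! Suc i))
     \<and> E (last cs) (hd cs)"

definition cycle_weight :: "('a \<Rightarrow> 'a \<Rightarrow> nat) \<Rightarrow> 'a list \<Rightarrow> nat" where
  "cycle_weight w cs = walk_weight w (cs @ [hd cs])"

definition weighted_bipartite :: "'a set \<Rightarrow> ('a \<Rightarrow> 'a \<Rightarrow> bool) \<Rightarrow> ('a \<Rightarrow> 'a \<Rightarrow> nat) \<Rightarrow> 'a set \<Rightarrow> bool" where
  "weighted_bipartite V E w S \<longleftrightarrow>
     (\<forall>cs. is_cycle V E cs \<and> set cs \<subseteq> S \<longrightarrow> even (cycle_weight w cs))"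

end

theory Submission
  imports Defs
begin

fun walk :: "('a \<Rightarrow> 'a \<Rightarrow> bool) \<Rightarrow> 'a list \<Rightarrow> bool" where
  "walk E [] = True"
| "walk E [x] = True"
| "walk E (x # y # xs) = (E x y \<and> walk E (y # xs))"

lemma walk_nth: "walk E xs \<longleftrightarrow> (\<forall>i. Suc i < length xs \<longrightarrow> E (xs ! i) (xs ! Suc i))"
proof (induction E xs rule: walk.induct)
  case (3 E x y xs)
  show ?case
  proof
    assume "walk E (x # y # xs)"
    then show "\<forall>i. Suc i < length (x # y # xs) \<longrightarrow> E ((x # y # xs) ! i) ((x # y # xs) ! Suc i)"
      using 3 by (auto simp: nth_Cons split: nat.splits)
  next
    assume h: "\<forall>i. Suc i < length (x # y # xs) \<longrightarrow> E ((x # y # xs) ! i) ((x # y # xs) ! Suc i)"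
    have "E x y" using h[rule_format, of 0] by simp
    moreover have "\<forall>i. Suc i < length (y # xs) \<longrightarrow> E ((y # xs) ! i) ((y # xs) ! Suc i)"
    proof (intro allI impI)
      fix i assume "Suc i < length (y # xs)"
      then show "E ((y # xs) ! i) ((y # xs) ! Suc i)" using h[rule_format, of "Suc i"] by simp
    qed
    ultimately show "walk E (x # y # xs)" using 3 by simp
  qed
qed auto

lemma ww_simps[simp]:
  "walk_weight w [] = 0" "walk_weight w [x] = 0"
  "walk_weight w (x # y # xs) = w x y + walk_weight w (y # xs)"
  by (auto simp: walk_weight_def)

lemma ww_append: "walk_weight w (xs @ y # ys) = walk_weight w (xs @ [y]) + walk_weight w (y # ys)"
proof (induction xs)
  case (Cons a xs)
  then show ?case by (cases xs) auto
qed simp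

lemma walk_append: "walk E (xs @ y # ys) \<longleftrightarrow> walk E (xs @ [y]) \<and> walk E (y # ys)"
proof (induction xs)
  case (Cons a xs)
  then show ?case by (cases xs) auto
qed simp

lemma walk_rev:
  "(\<forall>x y. E x y \<longrightarrow> E y x) \<Longrightarrow> walk E xs \<Longrightarrow> walk E (rev xs)"
proof (induction E xs rule: walk.induct)
  case (3 E' x y xs)
  then have "walk E' (rev xs @ [y])" by simp
  moreover have "walk E' [y, x]" using 3 by simp
  ultimately show ?case using walk_append[of E' "rev xs" y "[x]"] by simp
qed auto

lemma ww_rev:
  "(\<forall>x y. E x y \<longrightarrow> w x y = w y x) \<Longrightarrow> walk E xs \<Longrightarrow> walk_weight w (rev xs) = walk_weight w xs"
proof (induction E xs rule: walk.induct)
  case (3 E' x y xs)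
  then have "walk_weight w (rev xs @ [y]) = walk_weight w (y # xs)" by simp
  moreover have "E' x y" using 3(3) by simp
  then have "w y x = w x y" using 3(2) by metis
  ultimately show ?case using ww_append[of w "rev xs" y "[x]"] by simp
qed auto

lemma ww_split: "walk_weight w (a @ y # b @ y # c) = walk_weight w (a @ y # c) + walk_weight w (y # b @ [y])"
  using ww_append[of w a y "b @ y # c"] ww_append[of w "y # b" y c] ww_append[of w a y c] by simp

lemma walk_split: "walk E (a @ y # b @ y # c) \<Longrightarrow> walk E (a @ y # c) \<and> walk E (y # b @ [y])"
  using walk_append[of E a y "b @ y # c"] walk_append[of E "y # b" y c] walk_append[of E a y c] by simp

lemma closed_walk_cycle:
  assumes wg: "wgraph V E w"
  shows "walk E (v # ys @ [v]) \<Longrightarrow> set (v # ys) \<subseteq> V \<Longrightarrow> odd (walk_weight w (v # ys @ [v])) \<Longrightarrow>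
    \<exists>cs. is_cycle V E cs \<and> odd (cycle_weight w cs) \<and> cycle_weight w cs \<le> walk_weight w (v # ys @ [v])"
proof (induction "length ys" arbitrary: v ys rule: less_induct)
  case less
  note wgd = wg[unfolded wgraph_def]
  show ?case
  proof (cases "distinct (v # ys)")
    case True
    show ?thesis
    proof (cases ys)
      case Nil
      then show ?thesis using less.prems wgd by simp
    next
      case (Cons a ys1)
      show ?thesis
      proof (cases ys1)
        case Nil
        then have "E v a" "walk_weight w (v # ys @ [v]) = w v a + w a v" using less.prems Cons by auto
        then have "walk_weight w (v # ys @ [v]) = 2 * w v a" using wgd by auto
        then show ?thesis using less.prems by simp
      next
        case (Cons b ys2)
        obtain ys' l where ysl: "ys = ys' @ [l]" using \<open>ys = a # ys1\<close> by (metis rev_exhaust list.simps(3))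
        have w1: "walk E (v # ys)" using walk_append[of E "v # ys'" l "[v]"] less.prems(1) ysl by simp
        have e1: "E l v" using walk_append[of E "v # ys'" l "[v]"] less.prems(1) ysl by simp
        have "is_cycle V E (v # ys)"
        proof -
          have "length (v # ys) \<ge> 3" using \<open>ys = a # ys1\<close> Cons by simp
          moreover have "\<forall>i. Suc i < length (v # ys) \<longrightarrow> E ((v # ys) ! i) ((v # ys) ! Suc i)"
            using w1 walk_nth by blast
          moreover have "E (last (v # ys)) (hd (v # ys))" using e1 ysl by simp
          ultimately show ?thesis unfolding is_cycle_def using True less.prems(2) by blast
        qed
        moreover have "cycle_weight w (v # ys) = walk_weight w (v # ys @ [v])"
          by (simp add: cycle_weight_def)
        ultimately show ?thesis using less.prems(3) by (intro exI[of _ "v # ys"]) auto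
      qed
    qed
  next
    case False
    from not_distinct_decomp[OF False] obtain a b c y where
      dec: "v # ys = a @ [y] @ b @ [y] @ c" by blast
    have W: "v # ys @ [v] = a @ y # b @ y # (c @ [v])" using dec by simp
    have wsum: "walk_weight w (v # ys @ [v]) = walk_weight w (a @ y # c @ [v]) + walk_weight w (y # b @ [y])"
      unfolding W by (rule ww_split)
    have wk: "walk E (a @ y # c @ [v])" "walk E (y # b @ [y])"
      using walk_split[of E a y b "c @ [v]"] less.prems(1) unfolding W by simp_all
    have setW: "set (a @ y # b @ y # c) \<subseteq> V" using dec less.prems(2) by simp
    show ?thesis
    proof (cases "odd (walk_weight w (y # b @ [y]))")
      case True
      have "length b < length ys" using arg_cong[OF dec, of length] by simp
      then obtain cs where "is_cycle V E cs \<and> odd (cycle_weight w cs) \<and> cycle_weight w cs \<le> walk_weight w (y # b @ [y])"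
        using less.hyps[of b y] wk True setW by auto
      then show ?thesis using wsum by fastforce
    next
      case False
      then have odd2: "odd (walk_weight w (a @ y # c @ [v]))" using less.prems(3) wsum by simp
      show ?thesis
      proof (cases a)
        case Nil
        then have "y = v" "ys = b @ y # c" using dec by auto
        then have "length c < length ys" by simp
        then obtain cs where "is_cycle V E cs \<and> odd (cycle_weight w cs) \<and> cycle_weight w cs \<le> walk_weight w (v # c @ [v])"
          using less.hyps[of c v] wk odd2 setW Nil \<open>y = v\<close> by auto
        then show ?thesis using wsum Nil \<open>y = v\<close> by fastforce
      next
        case (Cons v' a')
        then have "v' = v" "ys = a' @ y # b @ y # c" using dec by auto
        then have "length (a' @ y # c) < length ys" by simp
        moreover have "a @ y # c @ [v] = v # (a' @ y # c) @ [v]" using Cons \<open>v' = v\<close> by simp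
        ultimately obtain cs where "is_cycle V E cs \<and> odd (cycle_weight w cs) \<and> cycle_weight w cs \<le> walk_weight w (a @ y # c @ [v])"
          using less.hyps[of "a' @ y # c" v] wk odd2 setW Cons \<open>v' = v\<close> by auto
        then show ?thesis using wsum by fastforce
      qed
    qed
  qed
qed

lemma closed_walk_cycle2:
  assumes wg: "wgraph V E w" and "walk E zs" "length zs \<ge> 2" "hd zs = last zs" "set zs \<subseteq> V"
    "odd (walk_weight w zs)"
  shows "\<exists>cs. is_cycle V E cs \<and> odd (cycle_weight w cs) \<and> cycle_weight w cs \<le> walk_weight w zs"
proof -
  have zz: "zs = hd zs # tl zs" "tl zs \<noteq> []" using assms(3) by (cases zs; auto)+
  obtain v zs' where z: "zs = v # zs'" "zs' \<noteq> []" using zz by blast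
  obtain ys l where z2: "zs' = ys @ [l]" using z(2) by (metis rev_exhaust)
  have "l = v" using assms(4) z z2 by simp
  then have "zs = v # ys @ [v]" using z z2 by simp
  then show ?thesis using closed_walk_cycle[OF wg, of v ys] assms by auto
qed

lemma ball_path:
  assumes "x \<in> wball V E w n u"
  shows "\<exists>ps. is_path V E x u ps \<and> walk_weight w ps \<le> n"
proof -
  let ?S = "{enat (walk_weight w ps) | ps. is_path V E x u ps}"
  have le: "Inf ?S \<le> enat n" using assms by (simp add: wball_def wdist_def)
  have "?S \<noteq> {}"
  proof
    assume "?S = {}"
    then have "Inf ?S = \<infinity>" by (simp add: Inf_enat_def)
    then show False using le by simp
  qed
  then have "Inf ?S \<in> ?S" unfolding Inf_enat_def by (auto intro: LeastI)
  then obtain ps where "is_path V E x u ps" "Inf ?S = enat (walk_weight w ps)" by blast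
  then show ?thesis using le by auto
qed

lemma parity_lemma:
  "(\<forall>(a, b) \<in> set (zip zs (tl zs)). even (f a + w a b + f b)) \<Longrightarrow> zs \<noteq> [] \<Longrightarrow>
    even (walk_weight w zs + f (hd zs) + f (last zs))"
proof (induction zs rule: induct_list012)
  case (3 x y zs)
  then have "even (walk_weight w (y # zs) + f y + f (last (y # zs)))" by simp
  moreover have "even (f x + w x y + f y)" using 3(3) by simp
  ultimately obtain m where m: "(walk_weight w (y # zs) + f y + f (last (y # zs))) + (f x + w x y + f y) = 2 * m"
    by (metis dvd_add evenE)
  have eq: "walk_weight w (x # y # zs) + f (hd (x # y # zs)) + f (last (x # y # zs)) + 2 * f y
     = (walk_weight w (y # zs) + f y + f (last (y # zs))) + (f x + w x y + f y)" by simp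
  have "even (walk_weight w (x # y # zs) + f (hd (x # y # zs)) + f (last (x # y # zs)) + 2 * f y)"
    by (simp only: eq m) simp
  then show ?case by simp
qed auto

lemma walk_zip: "walk E zs \<Longrightarrow> (a, b) \<in> set (zip zs (tl zs)) \<Longrightarrow> E a b"
  by (induction E zs rule: walk.induct) auto

lemma zip_mem: "(a, b) \<in> set (zip zs (tl zs)) \<Longrightarrow> a \<in> set zs \<and> b \<in> set zs"
  by (metis in_set_zipE list.set_sel(2) tl_Nil empty_iff empty_set)

lemma walk_Cons: "X \<noteq> [] \<Longrightarrow> walk E (a # X) \<longleftrightarrow> E a (hd X) \<and> walk E X"
  by (cases X) auto

lemma ww_Cons: "X \<noteq> [] \<Longrightarrow> walk_weight w (a # X) = w a (hd X) + walk_weight w X"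
  by (cases X) auto

theorem lemma4p1:
  fixes V :: "'a set" and E :: "'a \<Rightarrow> 'a \<Rightarrow> bool" and w :: "'a \<Rightarrow> 'a \<Rightarrow> nat" and k :: nat
  assumes "k \<ge> 5"
    and "wgraph V E w"
    and "\<And>x y. E x y \<Longrightarrow> w x y \<in> {3, 4, 5}"
    and "\<And>cs. is_cycle V E cs \<Longrightarrow> odd (cycle_weight w cs) \<Longrightarrow> cycle_weight w cs \<ge> 2 * k + 1"
    and "u \<in> V"
  shows "weighted_bipartite V E w (wball V E w (k - 3) u)"
  unfolding weighted_bipartite_def
proof (intro allI impI, rule ccontr)
  fix cs
  assume cyc: "is_cycle V E cs \<and> set cs \<subseteq> wball V E w (k - 3) u" and od: "\<not> even (cycle_weight w cs)"
  note wgd = assms(2)[unfolded wgraph_def]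
  define P where "P x = (SOME ps. is_path V E x u ps \<and> walk_weight w ps \<le> k - 3)" for x
  define f where "f x = walk_weight w (P x)" for x
  have Pp: "is_path V E x u (P x) \<and> walk_weight w (P x) \<le> k - 3" if "x \<in> wball V E w (k - 3) u" for x
    unfolding P_def using ball_path[OF that] by (rule someI_ex)
  define zs where "zs = cs @ [hd cs]"
  have cs_ne: "cs \<noteq> []" using cyc by (auto simp: is_cycle_def)
  have wz: "walk E zs"
  proof -
    obtain cs' l where "cs = cs' @ [l]" using cs_ne by (metis rev_exhaust)
    moreover have "walk E cs" using cyc walk_nth by (auto simp: is_cycle_def)
    moreover have "E (last cs) (hd cs)" using cyc by (auto simp: is_cycle_def)
    ultimately show ?thesis unfolding zs_def using walk_append[of E cs' l "[hd cs]"] by simp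
  qed
  have "odd (walk_weight w zs)" using od by (simp add: zs_def cycle_weight_def)
  moreover have "hd zs = last zs" using cs_ne by (simp add: zs_def)
  ultimately have "\<not> (\<forall>(a, b) \<in> set (zip zs (tl zs)). even (f a + w a b + f b))"
    using parity_lemma[of zs f w] by (auto simp: zs_def)
  then obtain a b where ab: "(a, b) \<in> set (zip zs (tl zs))" "odd (f a + w a b + f b)" by auto
  have Eab: "E a b" using walk_zip[OF wz ab(1)] .
  have "a \<in> set cs" "b \<in> set cs" using zip_mem[OF ab(1)] cs_ne by (auto simp: zs_def)
  then have inb: "a \<in> wball V E w (k - 3) u" "b \<in> wball V E w (k - 3) u" using cyc by auto
  note pa = Pp[OF inb(1)] and pb = Pp[OF inb(2)]
  have paV: "P a \<noteq> []" "hd (P a) = a" "last (P a) = u" "set (P a) \<subseteq> V" "walk E (P a)"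
    using pa by (auto simp: is_path_def walk_nth)
  have pbV: "P b \<noteq> []" "hd (P b) = b" "last (P b) = u" "set (P b) \<subseteq> V" "walk E (P b)"
    using pb by (auto simp: is_path_def walk_nth)
  obtain pa' where pa': "P a = pa' @ [u]" using paV by (metis append_butlast_last_id)
  obtain pb' where pb': "P b = pb' @ [u]" using pbV by (metis append_butlast_last_id)
  define X where "X = pb' @ u # rev pa'"
  define L where "L = a # X"
  have Xne: "X \<noteq> []" by (simp add: X_def)
  have hdX: "hd X = b" using pbV(2) pb' by (cases pb') (auto simp: X_def)
  have revPa: "rev (P a) = u # rev pa'" using pa' by simp
  have symE: "\<forall>x y. E x y \<longrightarrow> E y x" using wgd by blast
  have symw: "\<forall>x y. E x y \<longrightarrow> w x y = w y x" using wgd by blast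
  have "walk E X" unfolding X_def
    using walk_append[of E pb' u "rev pa'"] pbV(5) pb' walk_rev[OF symE paV(5)] revPa by simp
  then have wL: "walk E L" unfolding L_def using walk_Cons[OF Xne] hdX Eab by simp
  have "walk_weight w X = f b + f a" unfolding X_def f_def
    using ww_append[of w pb' u "rev pa'"] pb' ww_rev[OF symw paV(5)] revPa by simp
  then have wwL: "walk_weight w L = w a b + f b + f a" unfolding L_def using ww_Cons[OF Xne] hdX by simp
  have "last L = a"
  proof -
    have "last L = last (rev (P a))" unfolding L_def X_def using revPa by simp
    also have "\<dots> = a" using paV(1,2) by (simp add: last_rev)
    finally show ?thesis .
  qed
  moreover have "length L \<ge> 2" using Xne by (cases X) (auto simp: L_def)
  moreover have "set L \<subseteq> V" unfolding L_def X_def using paV(4) pbV(4) pa' pb' wgd Eab by auto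
  moreover have "odd (walk_weight w L)" using wwL ab(2) by (simp add: algebra_simps)
  ultimately obtain cs2 where c2: "is_cycle V E cs2" "odd (cycle_weight w cs2)" "cycle_weight w cs2 \<le> walk_weight w L"
    using closed_walk_cycle2[OF assms(2) wL] by (auto simp: L_def)
  have "w a b \<le> 5" using assms(3)[OF Eab] by auto
  moreover have "f a \<le> k - 3" "f b \<le> k - 3" using pa pb by (auto simp: f_def)
  ultimately have "walk_weight w L \<le> 2 * k - 1" using wwL assms(1) by linarith
  then show False using assms(4)[OF c2(1,2)] c2(3) assms(1) by linarith
qed

end
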